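(* Let $n\ge 2$ be an integer and $A\subseteq L_n$. The following are equivalent: (i) $(X_n,\tau(A))$ is Lindelöf; (ii) $(X_n,\tau(A))$ is paracompact; (iii) $(X_n,\tau(A))$ is countably paracompact; (iv) $(X_n,\tau(A))$ is normal; (v) $L_n\setminus A$ does not contain a closed uncountable subset of $(L_n,\tau_E|_{L_n})$.
   Context: For $\overline{x},\overline{a}\in\mathbb R^n$ let $|\overline{x}-\overline{a}|$ be the Euclidean distance and $B(\overline{a},\epsilon)=\{\overline{x}\in\mathbb R^n:|\overline{x}-\overline{a}|<\epsilon\}$. Let $P_n=\{\overline{x}\in\mathbb R^n: x_n>0\}$, $L_n=\{\overline{x}\in\mathbb R^n: x_n=0\}$, $X_n=P_n\cup L_n$, and let $\tau_E$ denote the Euclidean topology on $X_n$. For $\overline{a}\in L_n$ and $\epsilon>0$ put $\overline{a(\epsilon)}=(a_1,\dots,a_{n-1},\epsilon)$ and $\tilde B(\overline{a},\epsilon)=\{\overline{a}\}\cup B(\overline{a(\epsilon)},\epsilon)$. For $A\subseteq L_n$, the topology $\tau(A)$ on $X_n$ is generated by the local bases: at $\overline{a}\in P_n$, the sets $B(\overline{a},\epsilon)$ with $0<\epsilon<a_n$; at $\overline{a}\in A$, the sets $B(\overline{a},\epsilon)\cap X_n$ with $\epsilon>0$; at $\overline{a}\in L_n\setminus A$, the sets $\tilde B(\overline{a},\epsilon)$ with $\epsilon>0$. *)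

theory Defs
  imports "HOL-Analysis.Analysis"
begin

text \<open>Model of R^n (n = CARD('m) + 1 >= 2): pairs (x, t) with x in R^(n-1) and t the last
  coordinate. The product metric on real^'m \<times> real is exactly the Euclidean metric.\<close>

type_synonym 'm pt = "(real^'m) \<times> real"

definition Pn :: "'m::finite pt set" where "Pn = {p. snd p > 0}"
definition Ln :: "'m::finite pt set" where "Ln = {p. snd p = 0}"
definition Xn :: "'m::finite pt set" where "Xn = Pn \<union> Ln"

definition tildeB :: "'m::finite pt \<Rightarrow> real \<Rightarrow> 'm pt set" where
  "tildeB a e = insert a (ball (fst a, e) e)"

definition tauA_open :: "'m::finite pt set \<Rightarrow> 'm pt set \<Rightarrow> bool" where
  "tauA_open A U \<longleftrightarrow> U \<subseteq> Xn \<and>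
     (\<forall>a\<in>U. \<exists>e>0.
        (a \<in> Pn \<longrightarrow> e < snd a \<and> ball a e \<subseteq> U) \<and>
        (a \<in> A \<longrightarrow> ball a e \<inter> Xn \<subseteq> U) \<and>
        (a \<in> Ln - A \<longrightarrow> tildeB a e \<subseteq> U))"

lemma tildeB_mono:
  assumes "0 < e" "e \<le> d"
  shows "tildeB a e \<subseteq> tildeB a d"
proof
  fix p assume p: "p \<in> tildeB a e"
  show "p \<in> tildeB a d"
  proof (cases "p = a")
    case True then show ?thesis by (simp add: tildeB_def)
  next
    case False
    obtain x t where pxt: "p = (x, t)" by fastforce
    have "dist (fst a, e) (x, t) < e" using p False pxt by (simp add: tildeB_def)
    hence "sqrt ((dist (fst a) x)\<^sup>2 + (e - t)\<^sup>2) < sqrt (e\<^sup>2)"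
      using assms by (simp add: dist_Pair_Pair dist_real_def)
    hence h: "(dist (fst a) x)\<^sup>2 + (e - t)\<^sup>2 < e\<^sup>2"
      using real_sqrt_less_iff by blast
    hence t0: "t > 0" using assms
      by (smt (verit, best) zero_le_power2 power2_eq_square mult_mono)
    have "(dist (fst a) x)\<^sup>2 + t\<^sup>2 < 2 * e * t" using h by (simp add: power2_eq_square algebra_simps)
    also have "\<dots> \<le> 2 * d * t" using assms t0 by simp
    finally have "(dist (fst a) x)\<^sup>2 + (d - t)\<^sup>2 < d\<^sup>2" by (simp add: power2_eq_square algebra_simps)
    hence "sqrt ((dist (fst a) x)\<^sup>2 + (d - t)\<^sup>2) < d" using assms
      by (intro real_less_lsqrt) auto
    hence "dist (fst a, d) (x, t) < d"
      by (simp add: dist_Pair_Pair dist_real_def)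
    thus ?thesis using pxt by (simp add: tildeB_def)
  qed
qed

lemma istopology_tauA_open: "istopology (tauA_open A)"
  unfolding istopology_def
proof (intro conjI allI impI)
  fix S T assume S: "tauA_open A S" and T: "tauA_open A T"
  show "tauA_open A (S \<inter> T)"
    unfolding tauA_open_def
  proof (intro conjI ballI)
    show "S \<inter> T \<subseteq> Xn" using S by (auto simp: tauA_open_def)
  next
    fix a assume a: "a \<in> S \<inter> T"
    obtain e1 where e1: "e1 > 0" "(a \<in> Pn \<longrightarrow> e1 < snd a \<and> ball a e1 \<subseteq> S)"
      "(a \<in> A \<longrightarrow> ball a e1 \<inter> Xn \<subseteq> S)" "(a \<in> Ln - A \<longrightarrow> tildeB a e1 \<subseteq> S)"
      using S a unfolding tauA_open_def by blast
    obtain e2 where e2: "e2 > 0" "(a \<in> Pn \<longrightarrow> e2 < snd a \<and> ball a e2 \<subseteq> T)"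
      "(a \<in> A \<longrightarrow> ball a e2 \<inter> Xn \<subseteq> T)" "(a \<in> Ln - A \<longrightarrow> tildeB a e2 \<subseteq> T)"
      using T a unfolding tauA_open_def by blast
    let ?e = "min e1 e2"
    have m1: "tildeB a ?e \<subseteq> tildeB a e1" "tildeB a ?e \<subseteq> tildeB a e2"
      using e1(1) e2(1) tildeB_mono[of ?e e1 a] tildeB_mono[of ?e e2 a] by auto
    show "\<exists>e>0. (a \<in> Pn \<longrightarrow> e < snd a \<and> ball a e \<subseteq> S \<inter> T) \<and>
        (a \<in> A \<longrightarrow> ball a e \<inter> Xn \<subseteq> S \<inter> T) \<and> (a \<in> Ln - A \<longrightarrow> tildeB a e \<subseteq> S \<inter> T)"
      using e1 e2 m1 by (intro exI[of _ ?e]) auto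
  qed
next
  fix K assume K: "\<forall>S\<in>K. tauA_open A S"
  show "tauA_open A (\<Union>K)"
    unfolding tauA_open_def
  proof (intro conjI ballI)
    show "\<Union>K \<subseteq> Xn" using K by (auto simp: tauA_open_def)
  next
    fix a assume "a \<in> \<Union>K"
    then obtain S where S: "S \<in> K" "a \<in> S" by blast
    then obtain e where "e > 0" "(a \<in> Pn \<longrightarrow> e < snd a \<and> ball a e \<subseteq> S)"
      "(a \<in> A \<longrightarrow> ball a e \<inter> Xn \<subseteq> S)" "(a \<in> Ln - A \<longrightarrow> tildeB a e \<subseteq> S)"
      using K unfolding tauA_open_def by blast
    then show "\<exists>e>0. (a \<in> Pn \<longrightarrow> e < snd a \<and> ball a e \<subseteq> \<Union>K) \<and>
        (a \<in> A \<longrightarrow> ball a e \<inter> Xn \<subseteq> \<Union>K) \<and> (a \<in> Ln - A \<longrightarrow> tildeB a e \<subseteq> \<Union>K)"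
      using S by (intro exI[of _ e]) blast
  qed
qed

definition tauA :: "'m::finite pt set \<Rightarrow> 'm pt topology" where
  "tauA A = topology (tauA_open A)"

lemma openin_tauA: "openin (tauA A) U \<longleftrightarrow> tauA_open A U"
  unfolding tauA_def using topology_inverse'[OF istopology_tauA_open[of A]] by simp

text \<open>Refinements and (countable) paracompactness; no separation axiom is built in.\<close>
definition open_refinement :: "'a topology \<Rightarrow> 'a set set \<Rightarrow> 'a set set \<Rightarrow> bool" where
  "open_refinement X \<V> \<U> \<longleftrightarrow>
     (\<forall>V\<in>\<V>. openin X V) \<and> \<Union>\<V> = topspace X \<and> (\<forall>V\<in>\<V>. \<exists>U\<in>\<U>. V \<subseteq> U)"

definition paracompact_space :: "'a topology \<Rightarrow> bool" where
  "paracompact_space X \<longleftrightarrow>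
     (\<forall>\<U>. (\<forall>U\<in>\<U>. openin X U) \<and> \<Union>\<U> = topspace X \<longrightarrow>
        (\<exists>\<V>. open_refinement X \<V> \<U> \<and> locally_finite_in X \<V>))"

definition countably_paracompact_space :: "'a topology \<Rightarrow> bool" where
  "countably_paracompact_space X \<longleftrightarrow>
     (\<forall>\<U>. countable \<U> \<and> (\<forall>U\<in>\<U>. openin X U) \<and> \<Union>\<U> = topspace X \<longrightarrow>
        (\<exists>\<V>. open_refinement X \<V> \<U> \<and> locally_finite_in X \<V>))"

end

theory Submission
  imports Defs
begin


lemma dist_pt: "dist (a::'m::finite pt) b = sqrt ((dist (fst a) (fst b))\<^sup>2 + (snd a - snd b)\<^sup>2)"
  by (cases a; cases b) (simp add: dist_Pair_Pair dist_real_def)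

lemma sqrt_lt_iff: "e > 0 \<Longrightarrow> sqrt X < e \<longleftrightarrow> X < e\<^sup>2"
  by (metis abs_of_pos real_sqrt_abs real_sqrt_less_iff)

lemma sqrt_le_iff: "e > 0 \<Longrightarrow> sqrt X \<le> e \<longleftrightarrow> X \<le> e\<^sup>2"
  by (metis abs_of_pos real_sqrt_abs real_sqrt_le_iff)

lemma mem_tildeB:
  assumes "e > 0"
  shows "p \<in> tildeB a e \<longleftrightarrow> p = a \<or> (dist (fst a) (fst p))\<^sup>2 + (snd p)\<^sup>2 < 2*e * snd p"
proof -
  have "dist (fst a, e) p < e \<longleftrightarrow> (dist (fst a) (fst p))\<^sup>2 + (e - snd p)\<^sup>2 < e\<^sup>2"
    using assms by (simp add: dist_pt sqrt_lt_iff)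
  also have "\<dots> \<longleftrightarrow> (dist (fst a) (fst p))\<^sup>2 + (snd p)\<^sup>2 < 2*e * snd p"
    by (simp add: power2_eq_square algebra_simps)
  finally show ?thesis by (auto simp: tildeB_def)
qed

lemma mem_cball_c:
  fixes a :: "'m::finite pt"
  assumes "e > 0"
  shows "p \<in> cball (fst a, e) e \<longleftrightarrow> (dist (fst a) (fst p))\<^sup>2 + (snd p)\<^sup>2 \<le> 2*e * snd p"
proof -
  have "dist (fst a, e) p = sqrt ((dist (fst a) (fst p))\<^sup>2 + (e - snd p)\<^sup>2)"
    using dist_pt[of "(fst a, e)" p] by simp
  then have "dist (fst a, e) p \<le> e \<longleftrightarrow> (dist (fst a) (fst p))\<^sup>2 + (e - snd p)\<^sup>2 \<le> e\<^sup>2"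
    using sqrt_le_iff[OF assms] by simp
  also have "\<dots> \<longleftrightarrow> (dist (fst a) (fst p))\<^sup>2 + (snd p)\<^sup>2 \<le> 2*e * snd p"
    by (simp add: power2_eq_square algebra_simps)
  finally show ?thesis by auto
qed

lemma mem_ball_L:
  assumes "e > 0" "a \<in> Ln"
  shows "p \<in> ball a e \<longleftrightarrow> (dist (fst a) (fst p))\<^sup>2 + (snd p)\<^sup>2 < e\<^sup>2"
  using assms by (simp add: dist_pt sqrt_lt_iff Ln_def)

lemma Xn_iff: "p \<in> Xn \<longleftrightarrow> snd p \<ge> 0"
  by (auto simp: Xn_def Pn_def Ln_def)

lemma tildeB_snd:
  assumes "e > 0" "p \<in> tildeB a e" "p \<noteq> a"
  shows "snd p > 0"
proof -
  have "(dist (fst a) (fst p))\<^sup>2 + (snd p)\<^sup>2 < 2*e * snd p" using assms mem_tildeB by blast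
  moreover have "(dist (fst a) (fst p))\<^sup>2 + (snd p)\<^sup>2 \<ge> 0" by simp
  ultimately have "0 < e * snd p" by linarith
  thus ?thesis using assms(1) by (simp add: zero_less_mult_iff)
qed

lemma tildeB_Xn: "e > 0 \<Longrightarrow> a \<in> Ln \<Longrightarrow> tildeB a e \<subseteq> Xn"
proof
  fix p assume "e > 0" "a \<in> Ln" "p \<in> tildeB a e"
  then show "p \<in> Xn"
  proof (cases "p = a")
    case True then show ?thesis using \<open>a \<in> Ln\<close> by (simp add: Xn_def)
  next
    case False then have "snd p > 0" using tildeB_snd \<open>e > 0\<close> \<open>p \<in> tildeB a e\<close> by blast
    then show ?thesis unfolding Xn_iff by simp
  qed
qed

lemma tildeB_Pn: "e > 0 \<Longrightarrow> tildeB a e - {a} \<subseteq> Pn"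
proof
  fix p assume "e > 0" "p \<in> tildeB a e - {a}"
  then have "snd p > 0" using tildeB_snd by blast
  then show "p \<in> Pn" unfolding Pn_def by simp
qed

lemma tildeB_ball:
  assumes "e > 0" "a \<in> Ln"
  shows "tildeB a e \<subseteq> ball a (2*e)"
proof
  fix p assume p: "p \<in> tildeB a e"
  show "p \<in> ball a (2*e)"
  proof (cases "p = a")
    case True then show ?thesis using assms by simp
  next
    case False
    have "dist (fst a, e) p < e" using p False by (auto simp: tildeB_def)
    moreover have "dist a (fst a, e) = e" using assms by (simp add: dist_pt Ln_def)
    ultimately have "dist a p < 2*e" using dist_triangle[of a p "(fst a, e)"] by linarith
    thus ?thesis by simp
  qed
qed

lemma ball_Pn: "e \<le> snd a \<Longrightarrow> ball a e \<subseteq> Pn"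
proof
  fix p assume "e \<le> snd a" "p \<in> ball a e"
  then have "dist a p < snd a" by simp
  moreover have "sqrt ((snd a - snd p)\<^sup>2) \<le> sqrt ((dist (fst a) (fst p))\<^sup>2 + (snd a - snd p)\<^sup>2)"
    by (rule real_sqrt_le_mono) simp
  then have "\<bar>snd a - snd p\<bar> \<le> dist a p" unfolding dist_pt[of a p] by simp
  ultimately show "p \<in> Pn" by (simp add: Pn_def)
qed

lemma Xn_cases: "p \<in> Xn \<Longrightarrow> A \<subseteq> Ln \<Longrightarrow> p \<in> Pn \<or> p \<in> A \<or> p \<in> Ln - A"
  unfolding Xn_def by blast

lemma PL_disj: "p \<in> Pn \<Longrightarrow> p \<notin> Ln" by (simp add: Pn_def Ln_def)

lemma open_Xn_tauA:
  assumes "open S" "A \<subseteq> Ln"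
  shows "tauA_open A (S \<inter> Xn)"
  unfolding tauA_open_def
proof (intro conjI ballI)
  show "S \<inter> Xn \<subseteq> Xn" by blast
next
  fix a assume a: "a \<in> S \<inter> Xn"
  then obtain e where e: "e > 0" "ball a e \<subseteq> S" using assms open_contains_ball by blast
  consider "a \<in> Pn" | "a \<in> A" | "a \<in> Ln - A" using Xn_cases a assms by blast
  then show "\<exists>e>0. (a \<in> Pn \<longrightarrow> e < snd a \<and> ball a e \<subseteq> S \<inter> Xn) \<and>
        (a \<in> A \<longrightarrow> ball a e \<inter> Xn \<subseteq> S \<inter> Xn) \<and> (a \<in> Ln - A \<longrightarrow> tildeB a e \<subseteq> S \<inter> Xn)"
  proof cases
    case 1
    define d where "d = min e (snd a / 2)"
    have "snd a > 0" using 1 by (simp add: Pn_def)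
    then have d: "d > 0" "d < snd a" "d \<le> snd a" using e by (auto simp: d_def)
    have "ball a d \<subseteq> ball a e" by (rule subset_ball) (simp add: d_def)
    moreover have "ball a d \<subseteq> Xn" using ball_Pn[OF d(3)] by (auto simp: Xn_def)
    moreover have "a \<notin> Ln" "a \<notin> A" using 1 assms by (auto simp: Pn_def Ln_def)
    ultimately have "ball a d \<subseteq> S \<inter> Xn" using e(2) by blast
    then show ?thesis using d(1,2) \<open>a \<notin> Ln\<close> \<open>a \<notin> A\<close> by (intro exI[of _ d]) blast
  next
    case 2
    have "a \<notin> Pn" "a \<notin> Ln - A" using 2 assms by (auto simp: Pn_def Ln_def)
    moreover have "ball a e \<inter> Xn \<subseteq> S \<inter> Xn" using e(2) by blast
    ultimately show ?thesis using e(1) by (intro exI[of _ e]) blast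
  next
    case 3
    have "tildeB a (e/2) \<subseteq> ball a e" using tildeB_ball[of "e/2" a] e 3 by auto
    moreover have "tildeB a (e/2) \<subseteq> Xn" using tildeB_Xn[of "e/2" a] e 3 by auto
    moreover have "a \<notin> Pn" "a \<notin> A" using 3 assms by (auto simp: Pn_def Ln_def)
    ultimately have "tildeB a (e/2) \<subseteq> S \<inter> Xn" using e(2) by blast
    moreover have "e/2 > 0" using e(1) by simp
    ultimately show ?thesis using \<open>a \<notin> Pn\<close> \<open>a \<notin> A\<close> by (intro exI[of _ "e/2"]) blast
  qed
qed

lemma topspace_tauA: "A \<subseteq> Ln \<Longrightarrow> topspace (tauA A) = Xn"
proof -
  assume "A \<subseteq> Ln"
  then have "openin (tauA A) Xn" using open_Xn_tauA[of UNIV A] by (simp add: openin_tauA)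
  moreover have "\<And>U. openin (tauA A) U \<Longrightarrow> U \<subseteq> Xn" by (simp add: openin_tauA tauA_open_def)
  ultimately show ?thesis by (metis openin_subset openin_topspace subset_antisym)
qed

lemma openin_Xn: "open S \<Longrightarrow> A \<subseteq> Ln \<Longrightarrow> openin (tauA A) (S \<inter> Xn)"
  by (simp add: openin_tauA open_Xn_tauA)

lemma closedin_Xn:
  assumes "closed S" "A \<subseteq> Ln"
  shows "closedin (tauA A) (S \<inter> Xn)"
proof -
  have "topspace (tauA A) - S \<inter> Xn = (- S) \<inter> Xn" using topspace_tauA[OF assms(2)] by blast
  moreover have "openin (tauA A) ((- S) \<inter> Xn)" using assms by (intro openin_Xn) auto
  ultimately show ?thesis using topspace_tauA[OF assms(2)] by (simp add: closedin_def)
qed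

lemma tildeB_open:
  assumes "e > 0" "a \<in> Ln - A" "A \<subseteq> Ln"
  shows "openin (tauA A) (tildeB a e)"
proof -
  have "open (ball (fst a, e) e)" by simp
  then have o: "openin (tauA A) (ball (fst a, e) e \<inter> Xn)" using openin_Xn assms by blast
  show ?thesis unfolding openin_tauA tauA_open_def
  proof (intro conjI ballI)
    show "tildeB a e \<subseteq> Xn" using tildeB_Xn assms by blast
  next
    fix p assume p: "p \<in> tildeB a e"
    show "\<exists>d>0. (p \<in> Pn \<longrightarrow> d < snd p \<and> ball p d \<subseteq> tildeB a e) \<and>
        (p \<in> A \<longrightarrow> ball p d \<inter> Xn \<subseteq> tildeB a e) \<and> (p \<in> Ln - A \<longrightarrow> tildeB p d \<subseteq> tildeB a e)"
    proof (cases "p = a")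
      case True then show ?thesis using assms by (intro exI[of _ e]) (auto simp: Pn_def Ln_def)
    next
      case False
      then have pP: "p \<in> Pn" "p \<in> ball (fst a, e) e" using p tildeB_Pn[OF assms(1), of a]
        by (auto simp: tildeB_def)
      then obtain d where d: "d > 0" "d < snd p \<and> ball p d \<subseteq> ball (fst a, e) e \<inter> Xn"
        using o unfolding openin_tauA tauA_open_def by (metis IntI Xn_iff less_eq_real_def Pn_def mem_Collect_eq)
      have "p \<notin> A" "p \<notin> Ln - A" using pP(1) assms(3) by (auto simp: Pn_def Ln_def)
      moreover have "ball p d \<subseteq> tildeB a e" using d by (auto simp: tildeB_def)
      ultimately show ?thesis using pP(1) d(1,2) by (intro exI[of _ d]) blast
    qed
  qed
qed



lemma regular_tauA:
  assumes AL: "A \<subseteq> Ln"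
  shows "regular_space (tauA A)"
  unfolding neighbourhood_base_of_closedin[symmetric] neighbourhood_base_of
proof (intro allI impI)
  fix W x assume Wx: "openin (tauA A) W \<and> x \<in> W"
  then obtain e where e: "e > 0" "(x \<in> Pn \<longrightarrow> e < snd x \<and> ball x e \<subseteq> W)"
    "(x \<in> A \<longrightarrow> ball x e \<inter> Xn \<subseteq> W)" "(x \<in> Ln - A \<longrightarrow> tildeB x e \<subseteq> W)"
    unfolding openin_tauA tauA_open_def by blast
  have xX: "x \<in> Xn" using Wx unfolding openin_tauA tauA_open_def by blast
  have cb: "cball x (e/2) \<subseteq> ball x e" using e(1) by (auto simp: subset_eq)
  consider "x \<in> Pn" | "x \<in> A" | "x \<in> Ln - A" using Xn_cases xX AL by blast
  then show "\<exists>U V. openin (tauA A) U \<and> closedin (tauA A) V \<and> x \<in> U \<and> U \<subseteq> V \<and> V \<subseteq> W"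
  proof cases
    case 1
    have "openin (tauA A) (ball x (e/2) \<inter> Xn)" using openin_Xn[OF _ AL, of "ball x (e/2)"] by simp
    moreover have "closedin (tauA A) (cball x (e/2) \<inter> Xn)" using closedin_Xn[OF _ AL, of "cball x (e/2)"] by simp
    moreover have "x \<in> ball x (e/2) \<inter> Xn" using e(1) xX by simp
    moreover have "ball x (e/2) \<inter> Xn \<subseteq> cball x (e/2) \<inter> Xn" by auto
    moreover have "cball x (e/2) \<inter> Xn \<subseteq> W" using cb e(2) 1 by blast
    ultimately show ?thesis by blast
  next
    case 2
    have "openin (tauA A) (ball x (e/2) \<inter> Xn)" using openin_Xn[OF _ AL, of "ball x (e/2)"] by simp
    moreover have "closedin (tauA A) (cball x (e/2) \<inter> Xn)" using closedin_Xn[OF _ AL, of "cball x (e/2)"] by simp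
    moreover have "x \<in> ball x (e/2) \<inter> Xn" using e(1) xX by simp
    moreover have "ball x (e/2) \<inter> Xn \<subseteq> cball x (e/2) \<inter> Xn" by auto
    moreover have "cball x (e/2) \<inter> Xn \<subseteq> W" using cb e(3) 2 by blast
    ultimately show ?thesis by blast
  next
    case 3
    have e2: "e/2 > 0" using e by simp
    have sub1: "tildeB x (e/2) \<subseteq> cball (fst x, e/2) (e/2) \<inter> Xn"
    proof -
      have "x \<in> cball (fst x, e/2) (e/2)" using 3 e(1) by (simp add: dist_pt Ln_def)
      moreover have "ball (fst x, e/2) (e/2) \<subseteq> cball (fst x, e/2) (e/2)" by auto
      ultimately show ?thesis using tildeB_Xn[OF e2, of x] 3 by (auto simp: tildeB_def)
    qed
    have sub2: "cball (fst x, e/2) (e/2) \<inter> Xn \<subseteq> tildeB x e"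
    proof
      fix p assume p: "p \<in> cball (fst x, e/2) (e/2) \<inter> Xn"
      then have ineq: "(dist (fst x) (fst p))\<^sup>2 + (snd p)\<^sup>2 \<le> 2*(e/2) * snd p"
        using mem_cball_c[OF e2, of p x] by auto
      have t0: "snd p \<ge> 0" using p Xn_iff by blast
      show "p \<in> tildeB x e"
      proof (cases "snd p = 0")
        case True
        then have "dist (fst x) (fst p) = 0" using ineq by simp
        then have "p = x" using True 3 by (cases p; cases x) (auto simp: Ln_def)
        then show ?thesis by (simp add: tildeB_def)
      next
        case False
        then have "snd p > 0" using t0 by simp
        then have "e * snd p < 2*e * snd p" using e(1) by simp
        moreover have "2*(e/2) * snd p = e * snd p" by simp
        ultimately have "(dist (fst x) (fst p))\<^sup>2 + (snd p)\<^sup>2 < 2*e * snd p" using ineq by linarith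
        then show ?thesis using mem_tildeB[OF e(1)] by blast
      qed
    qed
    have "closedin (tauA A) (cball (fst x, e/2) (e/2) \<inter> Xn)"
      using closedin_Xn[OF _ AL, of "cball (fst x, e/2) (e/2)"] by simp
    moreover have "x \<in> tildeB x (e/2)" by (simp add: tildeB_def)
    moreover have "cball (fst x, e/2) (e/2) \<inter> Xn \<subseteq> W" using sub2 e(4) 3 by blast
    ultimately show ?thesis using tildeB_open[OF e2 3 AL] sub1 by blast
  qed
qed



lemma Lindelof_regular_paracompact:
  assumes L: "Lindelof_space X" and R: "regular_space X"
  shows "paracompact_space X"
  unfolding paracompact_space_def
proof (intro allI impI)
  fix \<U> assume U: "(\<forall>U\<in>\<U>. openin X U) \<and> \<Union>\<U> = topspace X"
  define \<W> where "\<W> = {W. openin X W \<and> (\<exists>C U. closedin X C \<and> U \<in> \<U> \<and> W \<subseteq> C \<and> C \<subseteq> U)}"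
  have NB: "\<forall>W x. openin X W \<and> x \<in> W \<longrightarrow> (\<exists>U V. openin X U \<and> closedin X V \<and> x \<in> U \<and> U \<subseteq> V \<and> V \<subseteq> W)"
    using R unfolding neighbourhood_base_of_closedin[symmetric] neighbourhood_base_of by blast
  have "\<Union>\<W> = topspace X"
  proof
    show "\<Union>\<W> \<subseteq> topspace X" unfolding \<W>_def using openin_subset by blast
  next
    show "topspace X \<subseteq> \<Union>\<W>"
    proof
      fix x assume "x \<in> topspace X"
      then obtain U where "U \<in> \<U>" "x \<in> U" using U by blast
      then obtain W V where "openin X W" "closedin X V" "x \<in> W" "W \<subseteq> V" "V \<subseteq> U"
        using NB U by meson
      then show "x \<in> \<Union>\<W>" unfolding \<W>_def using \<open>U \<in> \<U>\<close> by blast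
    qed
  qed
  moreover have "\<forall>W\<in>\<W>. openin X W" unfolding \<W>_def by blast
  ultimately obtain \<W>' where W': "countable \<W>'" "\<W>' \<subseteq> \<W>" "\<Union>\<W>' = topspace X"
    using L unfolding Lindelof_space_def by meson
  show "\<exists>\<V>. open_refinement X \<V> \<U> \<and> locally_finite_in X \<V>"
  proof (cases "\<W>' = {}")
    case True
    then show ?thesis using W' by (intro exI[of _ "{}"]) (auto simp: open_refinement_def locally_finite_in_def)
  next
    case False
    define w where "w = from_nat_into \<W>'"
    have wr: "range w = \<W>'" using False W'(1) by (simp add: w_def range_from_nat_into)
    have "\<forall>n. \<exists>C U. closedin X C \<and> U \<in> \<U> \<and> w n \<subseteq> C \<and> C \<subseteq> U"
      using wr W'(2) unfolding \<W>_def by blast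
    then obtain C UU where CU: "\<And>n. closedin X (C n)" "\<And>n. UU n \<in> \<U>" "\<And>n. w n \<subseteq> C n" "\<And>n. C n \<subseteq> UU n"
      by metis
    have wo: "\<And>n. openin X (w n)" using wr W'(2) unfolding \<W>_def by blast
    define V where "V n = UU n - (\<Union>k<n. C k)" for n
    have Vo: "openin X (V n)" for n
      unfolding V_def using U CU by (intro openin_diff closedin_Union) auto
    have cov: "\<Union>(range V) = topspace X"
    proof
      show "\<Union>(range V) \<subseteq> topspace X" using Vo openin_subset by blast
    next
      show "topspace X \<subseteq> \<Union>(range V)"
      proof
        fix x assume x: "x \<in> topspace X"
        then obtain m where "x \<in> w m" using W'(3) wr by auto
        then have ex: "\<exists>n. x \<in> C n" using CU by blast
        define n where "n = (LEAST n. x \<in> C n)"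
        have "x \<in> C n" unfolding n_def using ex by (rule LeastI_ex)
        moreover have "\<And>k. k < n \<Longrightarrow> x \<notin> C k" unfolding n_def using not_less_Least by blast
        ultimately have "x \<in> V n" unfolding V_def using CU by blast
        then show "x \<in> \<Union>(range V)" by blast
      qed
    qed
    have lf: "locally_finite_in X (range V)"
      unfolding locally_finite_in_def
    proof (intro conjI ballI)
      show "\<Union>(range V) \<subseteq> topspace X" using cov by simp
    next
      fix x assume "x \<in> topspace X"
      then obtain m where m: "x \<in> w m" using W'(3) wr by auto
      have "{U \<in> range V. U \<inter> w m \<noteq> {}} \<subseteq> V ` {..m}"
      proof
        fix U assume "U \<in> {U \<in> range V. U \<inter> w m \<noteq> {}}"
        then obtain n where n: "U = V n" "V n \<inter> w m \<noteq> {}" by blast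
        have "n \<le> m"
        proof (rule ccontr)
          assume "\<not> n \<le> m"
          then have "V n \<inter> C m = {}" unfolding V_def by auto
          then show False using n CU(3)[of m] by blast
        qed
        then show "U \<in> V ` {..m}" using n by blast
      qed
      then have "finite {U \<in> range V. U \<inter> w m \<noteq> {}}" using finite_subset by blast
      then show "\<exists>W. openin X W \<and> x \<in> W \<and> finite {U \<in> range V. U \<inter> W \<noteq> {}}"
        using m wo by blast
    qed
    have "open_refinement X (range V) \<U>"
      unfolding open_refinement_def using Vo cov CU unfolding V_def by blast
    then show ?thesis using lf by blast
  qed
qed



lemma closed_Ln: "closed (Ln :: 'm::finite pt set)"
proof -
  have "Ln = {p :: 'm pt. snd p = 0}" by (simp add: Ln_def)
  moreover have "closed {p :: 'm pt. snd p = 0}"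
    by (intro closed_Collect_eq continuous_intros)
  ultimately show ?thesis by simp
qed

lemma closed_Xn: "closed (Xn :: 'm::finite pt set)"
proof -
  have "Xn = {p :: 'm pt. 0 \<le> snd p}" using Xn_iff by blast
  moreover have "closed {p :: 'm pt. 0 \<le> snd p}"
    by (intro closed_Collect_le continuous_intros)
  ultimately show ?thesis by simp
qed

lemma openin_tauA_D:
  "openin (tauA A) U \<Longrightarrow> a \<in> U \<Longrightarrow> \<exists>e>0. (a \<in> Pn \<longrightarrow> e < snd a \<and> ball a e \<subseteq> U) \<and>
     (a \<in> A \<longrightarrow> ball a e \<inter> Xn \<subseteq> U) \<and> (a \<in> Ln - A \<longrightarrow> tildeB a e \<subseteq> U)"
  by (simp add: openin_tauA tauA_open_def)

lemma Lindelof_tauA: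
  fixes A :: "'m::finite pt set"
  assumes AL: "A \<subseteq> Ln"
    and P: "\<not> (\<exists>C. C \<subseteq> Ln - A \<and> closedin (subtopology euclidean Ln) C \<and> uncountable C)"
  shows "Lindelof_space (tauA A)"
  unfolding Lindelof_space_def topspace_tauA[OF AL]
proof (intro allI impI)
  fix \<U> assume U: "(\<forall>U\<in>\<U>. openin (tauA A) U) \<and> \<Union>\<U> = Xn"
  define N where "N = {p::'m pt. snd p < 0}"
  have XN: "Xn \<union> N = UNIV" using Xn_iff unfolding N_def by force
  define f where "f U = interior (U \<union> N)" for U
  obtain \<F>' where F': "\<F>' \<subseteq> f ` \<U>" "countable \<F>'" "\<Union>\<F>' = \<Union>(f ` \<U>)"
    using Lindelof[of "f ` \<U>"] unfolding f_def by auto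
  then obtain \<U>1 where U1: "countable \<U>1" "\<U>1 \<subseteq> \<U>" "\<F>' = f ` \<U>1"
    using countable_subset_image[of \<F>' f \<U>] by blast
  define R where "R = Xn - \<Union>(f ` \<U>)"
  have RL: "R \<subseteq> Ln - A"
  proof
    fix x assume x: "x \<in> R"
    then have xX: "x \<in> Xn" and xn: "\<And>U. U \<in> \<U> \<Longrightarrow> x \<notin> interior (U \<union> N)"
      unfolding R_def f_def by auto
    obtain U where U': "U \<in> \<U>" "x \<in> U" using U xX by blast
    have "openin (tauA A) U" using U U'(1) by blast
    then obtain e where e: "e > 0" "(x \<in> Pn \<longrightarrow> e < snd x \<and> ball x e \<subseteq> U)"
      "(x \<in> A \<longrightarrow> ball x e \<inter> Xn \<subseteq> U)"
      using openin_tauA_D[OF _ U'(2)] by blast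
    have "x \<notin> Pn"
    proof
      assume "x \<in> Pn"
      then have "ball x e \<subseteq> U \<union> N" using e by blast
      then have "x \<in> interior (U \<union> N)" using e(1) by (intro interiorI[of "ball x e"]) auto
      then show False using xn U' by blast
    qed
    moreover have "x \<notin> A"
    proof
      assume "x \<in> A"
      then have "ball x e \<subseteq> U \<union> N" using e XN by blast
      then have "x \<in> interior (U \<union> N)" using e(1) by (intro interiorI[of "ball x e"]) auto
      then show False using xn U' by blast
    qed
    ultimately show "x \<in> Ln - A" using Xn_cases[OF xX AL] by blast
  qed
  have "open (\<Union>(f ` \<U>))" unfolding f_def by blast
  then have "closed R" unfolding R_def using closed_Xn by (intro closed_Diff) auto
  then have "closedin (subtopology euclidean Ln) R" using RL by (intro closed_subset) auto
  then have cR: "countable R" using P RL by blast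
  have "\<forall>r\<in>R. \<exists>U\<in>\<U>. r \<in> U" using U RL unfolding R_def by blast
  then obtain g where g: "\<And>r. r \<in> R \<Longrightarrow> g r \<in> \<U> \<and> r \<in> g r" by metis
  show "\<exists>\<V>. countable \<V> \<and> \<V> \<subseteq> \<U> \<and> \<Union>\<V> = Xn"
  proof (intro exI[of _ "\<U>1 \<union> g ` R"] conjI)
    show "countable (\<U>1 \<union> g ` R)" using U1 cR by simp
    show "\<U>1 \<union> g ` R \<subseteq> \<U>" using U1 g by blast
    show "\<Union>(\<U>1 \<union> g ` R) = Xn"
    proof
      show "\<Union>(\<U>1 \<union> g ` R) \<subseteq> Xn" using U1 g U by blast
    next
      show "Xn \<subseteq> \<Union>(\<U>1 \<union> g ` R)"
      proof
        fix x :: "'m pt" assume xX: "x \<in> Xn"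
        show "x \<in> \<Union>(\<U>1 \<union> g ` R)"
        proof (cases "x \<in> R")
          case True then show ?thesis using g by blast
        next
          case False
          then have "x \<in> \<Union>(f ` \<U>1)" using xX F' U1 unfolding R_def by blast
          then obtain U where "U \<in> \<U>1" "x \<in> interior (U \<union> N)" unfolding f_def by blast
          then have "x \<in> U \<union> N" using interior_subset by blast
          moreover have "snd x \<ge> 0" using xX Xn_iff by blast
          ultimately have "x \<in> U" unfolding N_def by auto
          then show ?thesis using \<open>U \<in> \<U>1\<close> by blast
        qed
      qed
    qed
  qed
qed

lemma closedin_subset_C:
  fixes A :: "'m::finite pt set"
  assumes AL: "A \<subseteq> Ln" and C: "C \<subseteq> Ln - A" "closedin (subtopology euclidean Ln) C" and S: "S \<subseteq> C"
  shows "closedin (tauA A) S"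
proof -
  have cC: "closed C" using C(2) closed_Ln closedin_closed_trans by blast
  have "tauA_open A (Xn - S)"
    unfolding tauA_open_def
  proof (intro conjI ballI)
    show "Xn - S \<subseteq> Xn" by blast
  next
    fix a assume a: "a \<in> Xn - S"
    consider "a \<in> Pn" | "a \<in> A" | "a \<in> Ln - A" using Xn_cases a AL by blast
    then show "\<exists>e>0. (a \<in> Pn \<longrightarrow> e < snd a \<and> ball a e \<subseteq> Xn - S) \<and>
        (a \<in> A \<longrightarrow> ball a e \<inter> Xn \<subseteq> Xn - S) \<and> (a \<in> Ln - A \<longrightarrow> tildeB a e \<subseteq> Xn - S)"
    proof cases
      case 1
      then have sa: "snd a > 0" by (simp add: Pn_def)
      have "ball a (snd a / 2) \<subseteq> Pn" using sa by (intro ball_Pn) simp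
      moreover have "Pn \<inter> S = {}" using S C PL_disj by blast
      moreover have "Pn \<subseteq> Xn" by (simp add: Xn_def)
      ultimately have "ball a (snd a / 2) \<subseteq> Xn - S" by blast
      moreover have "a \<notin> Ln" using 1 PL_disj by blast
      ultimately show ?thesis using sa by (intro exI[of _ "snd a / 2"]) auto
    next
      case 2
      then have "a \<notin> C" using C by blast
      then obtain e where e: "e > 0" "ball a e \<subseteq> - C"
        using cC open_contains_ball[of "- C"] by blast
      then have "ball a e \<inter> Xn \<subseteq> Xn - S" using S by blast
      moreover have "a \<notin> Pn" "a \<notin> Ln - A" using 2 AL PL_disj by blast+
      ultimately show ?thesis using e(1) by (intro exI[of _ e]) blast
    next
      case 3
      have "tildeB a 1 \<subseteq> Xn" using tildeB_Xn[of 1 a] 3 by simp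
      moreover have "tildeB a 1 - {a} \<subseteq> Pn" using tildeB_Pn[of 1 a] by simp
      moreover have "Pn \<inter> S = {}" using S C PL_disj by blast
      ultimately have "tildeB a 1 \<subseteq> Xn - S" using a by blast
      moreover have "a \<notin> Pn" "a \<notin> A" using 3 PL_disj by blast+
      ultimately show ?thesis by (intro exI[of _ 1]) auto
    qed
  qed
  then have "openin (tauA A) (topspace (tauA A) - S)" by (simp add: topspace_tauA[OF AL] openin_tauA)
  moreover have "S \<subseteq> topspace (tauA A)" using S C topspace_tauA[OF AL] by (auto simp: Xn_def)
  ultimately show ?thesis by (simp add: closedin_def)
qed

lemma not_Lindelof_tauA:
  fixes A :: "'m::finite pt set"
  assumes AL: "A \<subseteq> Ln" and C: "C \<subseteq> Ln - A" "closedin (subtopology euclidean Ln) C" "uncountable C"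
  shows "\<not> Lindelof_space (tauA A)"
proof
  assume L: "Lindelof_space (tauA A)"
  define h where "h c = Xn - (C - {c})" for c
  have op: "openin (tauA A) (h c)" for c
  proof -
    have "closedin (tauA A) (C - {c})" using closedin_subset_C[OF AL C(1,2)] by blast
    then show ?thesis unfolding h_def topspace_tauA[OF AL, symmetric] by (rule openin_diff[OF openin_topspace])
  qed
  have CX: "C \<subseteq> Xn" using C by (auto simp: Xn_def)
  have "C \<noteq> {}" using C(3) by auto
  then have "\<Union>(h ` C) = Xn" unfolding h_def using CX by blast
  moreover have "\<forall>U\<in>h ` C. openin (tauA A) U" using op by blast
  ultimately obtain \<V> where V: "countable \<V>" "\<V> \<subseteq> h ` C" "\<Union>\<V> = Xn"
    using L[unfolded Lindelof_space_def topspace_tauA[OF AL], rule_format, of "h ` C"] by blast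
  then obtain C' where C': "countable C'" "C' \<subseteq> C" "\<V> = h ` C'"
    using countable_subset_image[of \<V> h C] by blast
  have "\<not> C \<subseteq> C'" using countable_subset[OF _ C'(1)] C(3) by blast
  then obtain c where c: "c \<in> C" "c \<notin> C'" by blast
  then have "c \<in> \<Union>\<V>" using V CX by blast
  then obtain c' where "c' \<in> C'" "c \<in> h c'" using C' by blast
  then show False using c C' unfolding h_def by blast
qed



lemma kernel:
  fixes C :: "'a::{metric_space, second_countable_topology} set"
  assumes cC: "closed C" and uC: "uncountable C"
  obtains K where "K \<subseteq> C" "closed K" "K \<noteq> {}" "\<And>y d. y \<in> K \<Longrightarrow> d > 0 \<Longrightarrow> uncountable (ball y d \<inter> K)"
proof -
  define K where "K = {x\<in>C. \<forall>e>0. uncountable (ball x e \<inter> C)}"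
  define \<B> where "\<B> = {ball x e | x e. x \<in> C \<and> e > 0 \<and> countable (ball x e \<inter> C)}"
  obtain \<B>' where B': "\<B>' \<subseteq> \<B>" "countable \<B>'" "\<Union>\<B>' = \<Union>\<B>"
    using Lindelof[of \<B>] unfolding \<B>_def by auto
  have CK: "C - K \<subseteq> \<Union>((\<lambda>B. B \<inter> C) ` \<B>')"
  proof
    fix x assume x: "x \<in> C - K"
    then obtain e where e: "e > 0" "countable (ball x e \<inter> C)" unfolding K_def by blast
    then have "ball x e \<in> \<B>" using x unfolding \<B>_def by blast
    moreover have "x \<in> ball x e" using e(1) by simp
    ultimately have "x \<in> \<Union>\<B>" by blast
    then have "x \<in> \<Union>\<B>'" using B'(3) by simp
    then show "x \<in> \<Union>((\<lambda>B. B \<inter> C) ` \<B>')" using x by blast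
  qed
  have "\<And>B. B \<in> \<B>' \<Longrightarrow> countable (B \<inter> C)" using B'(1) unfolding \<B>_def by blast
  then have "countable (\<Union>((\<lambda>B. B \<inter> C) ` \<B>'))" using B'(2) by (intro countable_UN) auto
  then have cCK: "countable (C - K)" by (rule countable_subset[OF CK])
  have KC: "K \<subseteq> C" unfolding K_def by blast
  have ne: "K \<noteq> {}"
  proof
    assume "K = {}"
    then have "C - K = C" by simp
    then show False using cCK uC by simp
  qed
  have cK: "closed K"
  proof -
    have "closure K \<subseteq> K"
    proof
      fix x assume x: "x \<in> closure K"
      have xC: "x \<in> C" using x closure_minimal[OF KC cC] by blast
      have "uncountable (ball x e \<inter> C)" if e: "e > 0" for e
      proof -
        have ap: "\<forall>e>0. \<exists>y\<in>K. dist y x < e" using x closure_approachable[of x K] by simp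
        have "e/2 > 0" using e by simp
        then obtain y where y: "y \<in> K" "dist y x < e/2" using ap by blast
        have unc: "uncountable (ball y (e/2) \<inter> C)" using y(1) \<open>e/2 > 0\<close> unfolding K_def by blast
        have sub: "ball y (e/2) \<subseteq> ball x e"
        proof
          fix z assume "z \<in> ball y (e/2)"
          then have "dist y z < e/2" by simp
          then have "dist x z < e" using y(2) dist_triangle[of x z y] dist_commute[of x y] by linarith
          then show "z \<in> ball x e" by simp
        qed
        show ?thesis
        proof
          assume "countable (ball x e \<inter> C)"
          moreover have "ball y (e/2) \<inter> C \<subseteq> ball x e \<inter> C" using sub by blast
          ultimately have "countable (ball y (e/2) \<inter> C)" using countable_subset by metis
          then show False using unc by simp
        qed
      qed
      then show "x \<in> K" using xC unfolding K_def by blast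
    qed
    then show ?thesis using closure_subset_eq[of K] by simp
  qed
  have unc: "uncountable (ball y d \<inter> K)" if "y \<in> K" "d > 0" for y d
  proof
    assume c: "countable (ball y d \<inter> K)"
    have "ball y d \<inter> C \<subseteq> (ball y d \<inter> K) \<union> (C - K)" by blast
    moreover have "countable ((ball y d \<inter> K) \<union> (C - K))" using c cCK by simp
    ultimately have "countable (ball y d \<inter> C)" using countable_subset by metis
    then show False using that unfolding K_def by blast
  qed
  show ?thesis by (rule that[OF KC cK ne unc])
qed

lemma dense_avoid:
  fixes K D :: "'a::metric_space set"
  assumes KD: "K \<subseteq> closure D" and U: "\<And>y d. y \<in> K \<Longrightarrow> d > 0 \<Longrightarrow> uncountable (ball y d \<inter> K)"
    and y: "y \<in> K" and e: "e > 0" and F: "finite F"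
  shows "\<exists>d\<in>D - F. dist d y < e"
proof -
  have u: "uncountable (ball y e \<inter> K)" using U y e by blast
  have "\<not> (ball y e \<inter> K \<subseteq> F)"
  proof
    assume "ball y e \<inter> K \<subseteq> F"
    then have "finite (ball y e \<inter> K)" using F finite_subset by blast
    then show False using u uncountable_infinite by blast
  qed
  then obtain z where z: "z \<in> ball y e" "z \<in> K" "z \<notin> F" by blast
  obtain \<epsilon> where eps: "\<epsilon> > 0" "\<forall>x\<in>F. x \<noteq> z \<longrightarrow> \<epsilon> \<le> dist z x"
    using finite_set_avoid[OF F, of z] by blast
  define \<epsilon>' where "\<epsilon>' = min \<epsilon> (e - dist y z)"
  have "\<epsilon>' > 0" using eps z(1) unfolding \<epsilon>'_def by simp
  moreover have "z \<in> closure D" using z KD by blast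
  ultimately obtain d where d: "d \<in> D" "dist d z < \<epsilon>'" using closure_approachable[of z D] by blast
  have "d \<notin> F"
  proof
    assume "d \<in> F"
    then have "d \<noteq> z" using z by blast
    then have "\<epsilon> \<le> dist z d" using eps \<open>d \<in> F\<close> by blast
    then show False using d(2) unfolding \<epsilon>'_def by (simp add: dist_commute)
  qed
  moreover have "dist d y < e"
    using d(2) dist_triangle[of d y z] dist_commute[of y z] unfolding \<epsilon>'_def by linarith
  ultimately show ?thesis using d(1) by blast
qed

lemma discs_meet:
  fixes a b :: "'m::finite pt"
  assumes a: "a \<in> Ln" and b: "b \<in> Ln" and r: "r > 0" and s: "s > 0"
    and ab: "dist a b < 2 * sqrt (r * s)"
  shows "tildeB a s \<inter> tildeB b r \<noteq> {}"
proof -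
  define L where "L = dist (fst a) (fst b)"
  have Lab: "dist a b = L" using a b unfolding L_def by (simp add: dist_pt Ln_def)
  have L0: "L \<ge> 0" unfolding L_def by simp
  have "L\<^sup>2 < (2 * sqrt (r * s))\<^sup>2" using ab Lab L0 by (intro power_strict_mono) auto
  then have L2: "L\<^sup>2 < 4 * r * s" using r s by (simp add: power_mult_distrib)
  define la where "la = s / (r + s)"
  define mu where "mu = r / (r + s)"
  define t where "t = 2 * r * s / (r + s)"
  define q where "q = (fst a + la *\<^sub>R (fst b - fst a), t)"
  have lpos: "la > 0" "mu > 0" using r s unfolding la_def mu_def by auto
  have tpos: "t > 0" using r s unfolding t_def by auto
  have d1: "dist (fst a) (fst q) = la * L"
  proof -
    have "fst a - fst q = - (la *\<^sub>R (fst b - fst a))" unfolding q_def by simp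
    then have "dist (fst a) (fst q) = norm (la *\<^sub>R (fst b - fst a))" by (simp add: dist_norm)
    also have "\<dots> = la * L" using lpos unfolding L_def by (simp add: dist_norm norm_minus_commute)
    finally show ?thesis .
  qed
  have d2: "dist (fst b) (fst q) = mu * L"
  proof -
    have "1 - la = mu" using r s unfolding la_def mu_def by (simp add: field_simps)
    moreover have "fst b - fst q = (1 - la) *\<^sub>R (fst b - fst a)" unfolding q_def
      by (simp add: algebra_simps scaleR_diff_left scaleR_diff_right)
    ultimately have "fst b - fst q = mu *\<^sub>R (fst b - fst a)" by simp
    then have "dist (fst b) (fst q) = norm (mu *\<^sub>R (fst b - fst a))" by (simp add: dist_norm)
    also have "\<dots> = mu * L" using lpos unfolding L_def by (simp add: dist_norm norm_minus_commute)
    finally show ?thesis .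
  qed
  have rs0: "r + s \<noteq> 0" "(r + s)\<^sup>2 \<noteq> 0" using r s by auto
  have h1: "la * (r + s) = s" using rs0 unfolding la_def by simp
  have h1': "mu * (r + s) = r" using rs0 unfolding mu_def by simp
  have h2: "t * (r + s) = 2 * r * s" using rs0 unfolding t_def by simp
  have "(la\<^sup>2 * (4 * r * s) + t\<^sup>2) * (r + s)\<^sup>2 = (la * (r + s))\<^sup>2 * (4 * r * s) + (t * (r + s))\<^sup>2"
    by (simp add: algebra_simps power2_eq_square)
  also have "\<dots> = s\<^sup>2 * (4 * r * s) + (2 * r * s)\<^sup>2" using h1 h2 by simp
  also have "\<dots> = (2 * s * (t * (r + s))) * (r + s)" using h2 by (simp add: algebra_simps power2_eq_square)
  also have "\<dots> = (2 * s * t) * (r + s)\<^sup>2" by (simp add: algebra_simps power2_eq_square)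
  finally have eq1: "la\<^sup>2 * (4 * r * s) + t\<^sup>2 = 2 * s * t" using rs0(2) by simp
  have "(mu\<^sup>2 * (4 * r * s) + t\<^sup>2) * (r + s)\<^sup>2 = (mu * (r + s))\<^sup>2 * (4 * r * s) + (t * (r + s))\<^sup>2"
    by (simp add: algebra_simps power2_eq_square)
  also have "\<dots> = r\<^sup>2 * (4 * r * s) + (2 * r * s)\<^sup>2" using h1' h2 by simp
  also have "\<dots> = (2 * r * (t * (r + s))) * (r + s)" using h2 by (simp add: algebra_simps power2_eq_square)
  also have "\<dots> = (2 * r * t) * (r + s)\<^sup>2" by (simp add: algebra_simps power2_eq_square)
  finally have eq2: "mu\<^sup>2 * (4 * r * s) + t\<^sup>2 = 2 * r * t" using rs0(2) by simp
  have "(la * L)\<^sup>2 < la\<^sup>2 * (4 * r * s)"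
    using L2 lpos by (simp add: power_mult_distrib)
  then have "(dist (fst a) (fst q))\<^sup>2 + (snd q)\<^sup>2 < 2 * s * snd q"
    using d1 eq1 unfolding q_def by simp
  then have qa: "q \<in> tildeB a s" using mem_tildeB[OF s] by blast
  have "(mu * L)\<^sup>2 < mu\<^sup>2 * (4 * r * s)"
    using L2 lpos by (simp add: power_mult_distrib)
  then have "(dist (fst b) (fst q))\<^sup>2 + (snd q)\<^sup>2 < 2 * r * snd q"
    using d2 eq2 unfolding q_def by simp
  then have qb: "q \<in> tildeB b r" using mem_tildeB[OF r] by blast
  show ?thesis using qa qb by blast
qed



lemma setup_KD:
  fixes A C :: "'m::finite pt set"
  assumes AL: "A \<subseteq> Ln" and C: "C \<subseteq> Ln - A" "closedin (subtopology euclidean Ln) C" "uncountable C"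
  obtains K D where "K \<subseteq> C" "closed K" "K \<noteq> {}" "\<And>y d. y \<in> K \<Longrightarrow> d > 0 \<Longrightarrow> uncountable (ball y d \<inter> K)"
    "countable D" "D \<subseteq> K" "K \<subseteq> closure D"
proof -
  have cC: "closed C" using C(2) closed_Ln closedin_closed_trans by blast
  obtain K where K: "K \<subseteq> C" "closed K" "K \<noteq> {}" "\<And>y d. y \<in> K \<Longrightarrow> d > 0 \<Longrightarrow> uncountable (ball y d \<inter> K)"
    using kernel[OF cC C(3)] by blast
  obtain D where D: "countable D" "D \<subseteq> K" "K \<subseteq> closure D" using separable[of K] by blast
  show ?thesis by (rule that[OF K D])
qed

lemma K_dense_open:
  fixes K D :: "'m::finite pt set" and r :: "'m pt \<Rightarrow> real"
  assumes KD: "K \<subseteq> closure D" "D \<subseteq> K" and U: "\<And>y d. y \<in> K \<Longrightarrow> d > 0 \<Longrightarrow> uncountable (ball y d \<inter> K)"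
    and F: "finite F" and r: "\<And>d. d \<in> D \<Longrightarrow> r d > 0" and s: "s > 0"
  shows "openin (top_of_set K) (K \<inter> (\<Union>d\<in>D - F. ball d (2 * sqrt (r d * s))))"
    "K \<subseteq> closure (K \<inter> (\<Union>d\<in>D - F. ball d (2 * sqrt (r d * s))))"
proof -
  show "openin (top_of_set K) (K \<inter> (\<Union>d\<in>D - F. ball d (2 * sqrt (r d * s))))"
    by (intro openin_open_Int) auto
  show "K \<subseteq> closure (K \<inter> (\<Union>d\<in>D - F. ball d (2 * sqrt (r d * s))))"
  proof
    fix y assume y: "y \<in> K"
    have "\<exists>x\<in>K \<inter> (\<Union>d\<in>D - F. ball d (2 * sqrt (r d * s))). dist x y < e" if e: "e > 0" for e
    proof -
      obtain d where d: "d \<in> D - F" "dist d y < e" using dense_avoid[OF KD(1) U y e F] by blast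
      have "r d * s > 0" using r s d by simp
      then have "d \<in> ball d (2 * sqrt (r d * s))" by simp
      then have "d \<in> K \<inter> (\<Union>d\<in>D - F. ball d (2 * sqrt (r d * s)))" using d KD(2) by blast
      then show ?thesis using d(2) by blast
    qed
    then show "y \<in> closure (K \<inter> (\<Union>d\<in>D - F. ball d (2 * sqrt (r d * s))))"
      using closure_approachable by blast
  qed
qed

lemma small_inverse:
  fixes s :: real assumes "s > 0"
  obtains m :: nat where "inverse (real (Suc m)) < s" "inverse (real (Suc m)) > 0"
  using reals_Archimedean[OF assms] by auto

lemma not_cpc_tauA:
  fixes A C :: "'m::finite pt set"
  assumes AL: "A \<subseteq> Ln" and C: "C \<subseteq> Ln - A" "closedin (subtopology euclidean Ln) C" "uncountable C"
  shows "\<not> countably_paracompact_space (tauA A)"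
proof
  assume cp: "countably_paracompact_space (tauA A)"
  obtain K D where K: "K \<subseteq> C" "closed K" "K \<noteq> {}" "\<And>y d. y \<in> K \<Longrightarrow> d > 0 \<Longrightarrow> uncountable (ball y d \<inter> K)"
    and D: "countable D" "D \<subseteq> K" "K \<subseteq> closure D"
    using setup_KD[OF AL C] by blast
  have clos: "\<And>S. S \<subseteq> C \<Longrightarrow> closedin (tauA A) S" using closedin_subset_C[OF AL C(1,2)] by blast
  have KL: "K \<subseteq> Ln - A" using K(1) C(1) by blast
  have KX: "K \<subseteq> Xn" using KL by (auto simp: Xn_def)
  have TX: "topspace (tauA A) = Xn" using topspace_tauA[OF AL] .
  define h where "h d = Xn - (K - {d})" for d
  define \<U> where "\<U> = insert (Xn - D) (h ` D)"
  have "countable \<U>" unfolding \<U>_def using D(1) by simp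
  moreover have "\<forall>U\<in>\<U>. openin (tauA A) U"
  proof
    fix U assume "U \<in> \<U>"
    then consider "U = Xn - D" | d where "d \<in> D" "U = Xn - (K - {d})" unfolding \<U>_def h_def by blast
    then show "openin (tauA A) U"
    proof cases
      case 1
      have "closedin (tauA A) D" using clos D(2) K(1) by blast
      then show ?thesis unfolding 1 TX[symmetric] by (rule openin_diff[OF openin_topspace])
    next
      case 2
      have "closedin (tauA A) (K - {d})" using clos K(1) by blast
      then show ?thesis unfolding 2 TX[symmetric] by (rule openin_diff[OF openin_topspace])
    qed
  qed
  moreover have "\<Union>\<U> = topspace (tauA A)"
  proof
    show "\<Union>\<U> \<subseteq> topspace (tauA A)" unfolding TX \<U>_def h_def by blast
  next
    show "topspace (tauA A) \<subseteq> \<Union>\<U>"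
    proof
      fix x assume x: "x \<in> topspace (tauA A)"
      show "x \<in> \<Union>\<U>"
      proof (cases "x \<in> D")
        case True
        then have "x \<in> h x" unfolding h_def using x TX by blast
        then show ?thesis unfolding \<U>_def using True by blast
      next
        case False
        then show ?thesis unfolding \<U>_def using x TX by blast
      qed
    qed
  qed
  ultimately obtain \<V> where V: "open_refinement (tauA A) \<V> \<U>" "locally_finite_in (tauA A) \<V>"
    using cp unfolding countably_paracompact_space_def by blast
  have Vo: "\<And>V. V \<in> \<V> \<Longrightarrow> openin (tauA A) V" and Vcov: "\<Union>\<V> = Xn"
    and Vref: "\<And>V. V \<in> \<V> \<Longrightarrow> \<exists>U\<in>\<U>. V \<subseteq> U"
    using V(1) TX unfolding open_refinement_def by auto
  have "\<forall>d\<in>D. \<exists>V\<in>\<V>. d \<in> V" using Vcov D(2) KX by blast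
  then obtain Vd where Vd: "\<And>d. d \<in> D \<Longrightarrow> Vd d \<in> \<V> \<and> d \<in> Vd d" by metis
  have VK: "Vd d \<inter> K \<subseteq> {d}" if d: "d \<in> D" for d
  proof -
    obtain U where U: "U \<in> \<U>" "Vd d \<subseteq> U" using Vref Vd d by blast
    have dU: "d \<in> U" using U Vd d by blast
    consider "U = Xn - D" | d' where "d' \<in> D" "U = h d'" using U(1) unfolding \<U>_def by blast
    then show ?thesis
    proof cases
      case 1 then show ?thesis using dU d by blast
    next
      case 2
      then have "d = d'" using dU d D(2) unfolding h_def by blast
      then show ?thesis using U(2) 2 unfolding h_def by blast
    qed
  qed
  have inj: "inj_on Vd D"
  proof (rule inj_onI)
    fix d d' assume "d \<in> D" "d' \<in> D" "Vd d = Vd d'"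
    then have "d' \<in> Vd d \<inter> K" using Vd D(2) by blast
    then show "d = d'" using VK[OF \<open>d \<in> D\<close>] by blast
  qed
  have "\<forall>d\<in>D. \<exists>r>0. tildeB d r \<subseteq> Vd d"
  proof
    fix d assume d: "d \<in> D"
    then have "openin (tauA A) (Vd d)" "d \<in> Vd d" using Vd Vo by blast+
    moreover have "d \<in> Ln - A" using d D(2) KL by blast
    ultimately show "\<exists>r>0. tildeB d r \<subseteq> Vd d" using openin_tauA_D by blast
  qed
  then obtain r where r: "\<And>d. d \<in> D \<Longrightarrow> r d > 0 \<and> tildeB d (r d) \<subseteq> Vd d" by metis
  define Og where "Og m F = K \<inter> (\<Union>d\<in>D - F. ball d (2 * sqrt (r d * inverse (real (Suc m)))))" for m :: nat and F
  define \<G> where "\<G> = (\<lambda>(m, F). Og m F) ` (UNIV \<times> {F. finite F \<and> F \<subseteq> D})"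
  have cG: "countable \<G>" unfolding \<G>_def using countable_Collect_finite_subset[OF D(1)] by auto
  have oG: "openin (top_of_set K) T \<and> K \<subseteq> closure T" if T: "T \<in> \<G>" for T
  proof -
    obtain m F where mF: "T = Og m F" "finite F" using T unfolding \<G>_def by force
    have "inverse (real (Suc m)) > 0" by simp
    then show ?thesis unfolding mF Og_def
      using K_dense_open[OF D(3) D(2) K(4) mF(2), of r "inverse (real (Suc m))"] r by blast
  qed
  have "K \<subseteq> closure (\<Inter>\<G>)" by (rule Baire[OF K(2) cG oG])
  then have "\<Inter>\<G> \<noteq> {}" using K(3) by auto
  then obtain x where x: "x \<in> \<Inter>\<G>" by blast
  have "Og 0 {} \<in> \<G>" unfolding \<G>_def by force
  then have xK: "x \<in> K" using x unfolding Og_def by blast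
  have "x \<in> topspace (tauA A)" using xK KX TX by blast
  then obtain W where W: "openin (tauA A) W" "x \<in> W" "finite {U \<in> \<V>. U \<inter> W \<noteq> {}}"
    using V(2) unfolding locally_finite_in_def by blast
  have "x \<in> Ln - A" using xK KL by blast
  then obtain s where s: "s > 0" "tildeB x s \<subseteq> W" using openin_tauA_D[OF W(1,2)] by blast
  obtain m where m: "inverse (real (Suc m)) < s" "inverse (real (Suc m)) > 0"
    using small_inverse[OF s(1)] by blast
  define s' where "s' = inverse (real (Suc m))"
  have s': "s' > 0" "tildeB x s' \<subseteq> W" using m s tildeB_mono[of s' s x] unfolding s'_def by auto
  define F where "F = {d\<in>D. tildeB x s' \<inter> tildeB d (r d) \<noteq> {}}"
  have "Vd ` F \<subseteq> {U \<in> \<V>. U \<inter> W \<noteq> {}}"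
  proof
    fix V assume "V \<in> Vd ` F"
    then obtain d where d: "d \<in> F" "V = Vd d" by blast
    then have "d \<in> D" unfolding F_def by blast
    have "tildeB x s' \<inter> tildeB d (r d) \<noteq> {}" using d unfolding F_def by blast
    then have "W \<inter> Vd d \<noteq> {}" using s'(2) r[OF \<open>d \<in> D\<close>] by blast
    then show "V \<in> {U \<in> \<V>. U \<inter> W \<noteq> {}}" using d Vd[OF \<open>d \<in> D\<close>] by blast
  qed
  then have "finite (Vd ` F)" using W(3) finite_subset by blast
  moreover have "inj_on Vd F" using inj unfolding F_def by (rule inj_on_subset) blast
  ultimately have fF: "finite F" using finite_imageD by blast
  have "F \<subseteq> D" unfolding F_def by blast
  then have "Og m F \<in> \<G>" unfolding \<G>_def using fF by blast
  then have "x \<in> Og m F" using x by blast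
  then obtain d where d: "d \<in> D - F" "x \<in> ball d (2 * sqrt (r d * s'))" unfolding Og_def s'_def by blast
  have "d \<in> Ln" using d D(2) KL by blast
  moreover have "x \<in> Ln" using xK KL by blast
  moreover have "dist x d < 2 * sqrt (r d * s')" using d(2) by (simp add: dist_commute)
  ultimately have "tildeB x s' \<inter> tildeB d (r d) \<noteq> {}"
    using discs_meet[of x d "r d" s'] r[of d] d(1) s'(1) by blast
  then have "d \<in> F" unfolding F_def using d by blast
  then show False using d by blast
qed

lemma not_normal_tauA:
  fixes A C :: "'m::finite pt set"
  assumes AL: "A \<subseteq> Ln" and C: "C \<subseteq> Ln - A" "closedin (subtopology euclidean Ln) C" "uncountable C"
  shows "\<not> normal_space (tauA A)"
proof
  assume nm: "normal_space (tauA A)"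
  obtain K D where K: "K \<subseteq> C" "closed K" "K \<noteq> {}" "\<And>y d. y \<in> K \<Longrightarrow> d > 0 \<Longrightarrow> uncountable (ball y d \<inter> K)"
    and D: "countable D" "D \<subseteq> K" "K \<subseteq> closure D"
    using setup_KD[OF AL C] by blast
  have clos: "\<And>S. S \<subseteq> C \<Longrightarrow> closedin (tauA A) S" using closedin_subset_C[OF AL C(1,2)] by blast
  have KL: "K \<subseteq> Ln - A" using K(1) C(1) by blast
  have "closedin (tauA A) D" "closedin (tauA A) (K - D)" using clos K(1) D(2) by blast+
  moreover have "disjnt D (K - D)" by (simp add: disjnt_def)
  ultimately obtain U V where UV: "openin (tauA A) U" "openin (tauA A) V" "D \<subseteq> U" "K - D \<subseteq> V" "disjnt U V"
    using nm[unfolded normal_space_def, rule_format, of D "K - D"] by blast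
  have "\<forall>d\<in>D. \<exists>r>0. tildeB d r \<subseteq> U"
  proof
    fix d assume d: "d \<in> D"
    then have "d \<in> U" using UV by blast
    moreover have "d \<in> Ln - A" using d D(2) KL by blast
    ultimately show "\<exists>r>0. tildeB d r \<subseteq> U" using openin_tauA_D[OF UV(1)] by blast
  qed
  then obtain r where r: "\<And>d. d \<in> D \<Longrightarrow> r d > 0 \<and> tildeB d (r d) \<subseteq> U" by metis
  define Og where "Og m = K \<inter> (\<Union>d\<in>D - {}. ball d (2 * sqrt (r d * inverse (real (Suc m)))))" for m :: nat
  define \<G> where "\<G> = range Og \<union> (\<lambda>d. K - {d}) ` D"
  have cG: "countable \<G>" unfolding \<G>_def using D(1) by simp
  have oG: "openin (top_of_set K) T \<and> K \<subseteq> closure T" if T: "T \<in> \<G>" for T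
  proof -
    consider m where "T = Og m" | d where "d \<in> D" "T = K - {d}" using T unfolding \<G>_def by blast
    then show ?thesis
    proof cases
      case 1
      have "inverse (real (Suc m)) > 0" by simp
      then show ?thesis unfolding 1 Og_def
        using K_dense_open[OF D(3) D(2) K(4) finite.emptyI, of r "inverse (real (Suc m))"] r by blast
    next
      case 2
      have "K - {d} = K \<inter> (- {d})" by blast
      then have "openin (top_of_set K) (K - {d})" by (metis open_Compl closed_singleton openin_open_Int)
      moreover have "K \<subseteq> closure (K - {d})"
      proof
        fix y assume y: "y \<in> K"
        have "\<exists>x\<in>K - {d}. dist x y < e" if e: "e > 0" for e
        proof -
          have "uncountable (ball y e \<inter> K)" using K(4) y e by blast
          moreover have "countable (ball y e \<inter> K)" if sub: "ball y e \<inter> K \<subseteq> {d}"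
            using countable_subset[OF sub] by simp
          ultimately have "\<not> (ball y e \<inter> K \<subseteq> {d})" by blast
          then obtain x where "x \<in> ball y e" "x \<in> K" "x \<noteq> d" by blast
          then show ?thesis by (auto simp: dist_commute)
        qed
        then show "y \<in> closure (K - {d})" using closure_approachable by blast
      qed
      ultimately show ?thesis unfolding 2 by blast
    qed
  qed
  have "K \<subseteq> closure (\<Inter>\<G>)" by (rule Baire[OF K(2) cG oG])
  then have "\<Inter>\<G> \<noteq> {}" using K(3) by auto
  then obtain x where x: "x \<in> \<Inter>\<G>" by blast
  have "Og 0 \<in> \<G>" unfolding \<G>_def by blast
  then have xK: "x \<in> K" using x unfolding Og_def by blast
  have "x \<notin> D"
  proof
    assume "x \<in> D"
    then have "K - {x} \<in> \<G>" unfolding \<G>_def by blast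
    then show False using x by blast
  qed
  then have "x \<in> V" using xK UV by blast
  moreover have "x \<in> Ln - A" using xK KL by blast
  ultimately obtain s where s: "s > 0" "tildeB x s \<subseteq> V" using openin_tauA_D[OF UV(2)] by blast
  obtain m where m: "inverse (real (Suc m)) < s" "inverse (real (Suc m)) > 0"
    using small_inverse[OF s(1)] by blast
  define s' where "s' = inverse (real (Suc m))"
  have s': "s' > 0" "tildeB x s' \<subseteq> V" using m s tildeB_mono[of s' s x] unfolding s'_def by auto
  have "Og m \<in> \<G>" unfolding \<G>_def by blast
  then have "x \<in> Og m" using x by blast
  then obtain d where d: "d \<in> D" "x \<in> ball d (2 * sqrt (r d * s'))" unfolding Og_def s'_def by blast
  have "d \<in> Ln" using d D(2) KL by blast
  moreover have "x \<in> Ln" using xK KL by blast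
  moreover have "dist x d < 2 * sqrt (r d * s')" using d(2) by (simp add: dist_commute)
  ultimately have "tildeB x s' \<inter> tildeB d (r d) \<noteq> {}"
    using discs_meet[of x d "r d" s'] r[of d] d(1) s'(1) by blast
  then have "V \<inter> U \<noteq> {}" using s'(2) r[OF d(1)] by blast
  then show False using UV(5) by (auto simp: disjnt_def)
qed


theorem mainTheorem6:
  fixes A :: "('m::finite) pt set"
  assumes "A \<subseteq> Ln"
  shows "(Lindelof_space (tauA A) \<longleftrightarrow> paracompact_space (tauA A)) \<and>
         (paracompact_space (tauA A) \<longleftrightarrow> countably_paracompact_space (tauA A)) \<and>
         (countably_paracompact_space (tauA A) \<longleftrightarrow> normal_space (tauA A)) \<and>
         (normal_space (tauA A) \<longleftrightarrow>
            \<not> (\<exists>C. C \<subseteq> Ln - A \<and> closedin (subtopology euclidean Ln) C \<and> uncountable C))"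
proof -
  let ?P = "\<not> (\<exists>C. C \<subseteq> Ln - A \<and> closedin (subtopology euclidean Ln) C \<and> uncountable C)"
  have reg: "regular_space (tauA A)" by (rule regular_tauA[OF assms])
  have PL: "?P \<Longrightarrow> Lindelof_space (tauA A)" by (rule Lindelof_tauA[OF assms])
  have LP: "Lindelof_space (tauA A) \<Longrightarrow> ?P" using not_Lindelof_tauA[OF assms] by blast
  have Lpara: "Lindelof_space (tauA A) \<Longrightarrow> paracompact_space (tauA A)"
    using Lindelof_regular_paracompact reg by blast
  have paracp: "paracompact_space (tauA A) \<Longrightarrow> countably_paracompact_space (tauA A)"
    unfolding paracompact_space_def countably_paracompact_space_def by blast
  have cpP: "countably_paracompact_space (tauA A) \<Longrightarrow> ?P" using not_cpc_tauA[OF assms] by blast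
  have Lnorm: "Lindelof_space (tauA A) \<Longrightarrow> normal_space (tauA A)"
    using regular_Lindelof_imp_normal_space reg by blast
  have normP: "normal_space (tauA A) \<Longrightarrow> ?P" using not_normal_tauA[OF assms] by blast
  show ?thesis using PL LP Lpara paracp cpP Lnorm normP by blast
qed

end
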